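(* Let $S$ be a right LCM monoid, let $F$ be an accurate foundation set for $S$ and let $s\in S_c$. Then $s\cdot F=\{sf\mid f\in F\}$ and $F\cdot s=\{fs\mid f\in F\}$ are accurate foundation sets for $S$. Moreover, for every unital $*$-homomorphism $\pi$ from $C^*(S)$ into a unital $C^*$-algebra, the relation $\sum_{f\in s\cdot F}\pi(e_{fS})=1$ holds if and only if both $\sum_{f\in F}\pi(e_{fS})=1$ and $\pi(v_sv_s^* )=1$ hold; and likewise the relation $\sum_{f\in F\cdot s}\pi(e_{fS})=1$ holds if and only if both $\sum_{f\in F}\pi(e_{fS})=1$ and $\pi(v_sv_s^* )=1$ hold.
   Context: A right LCM monoid is a countable discrete monoid $S$ that is left cancellative and such that for all $s,t\in S$ the intersection $sS\cap tS$ is either empty or equal to $rS$ for some $r\in S$. A finite subset $F\subset S$ is a foundation set if for every $t\in S$ there is $s\in F$ with $sS\cap tS\neq\emptyset$; it is accurate if $fS\cap f'S=\emptyset$ for distinct $f,f'\in F$. The core subsemigroup is $S_c=\{s\in S\mid sS\cap tS\neq\emptyset \text{ for all } t\in S\}$. The full semigroup $C^*$-algebra $C^*(S)$ (in the sense of Li) is the universal $C^*$-algebra generated by isometries $\{v_s: s\in S\}$ and projections $\{e_X : X\in\mathcal{J}(S)\}$, where $\mathcal{J}(S)=\{\emptyset\}\cup\{sS: s\in S\}$, subject to $v_{st}=v_sv_t$, $v_se_Xv_s^*=e_{sX}$, $e_S=1$, $e_\emptyset=0$, $e_Xe_Y=e_{X\cap Y}$; in particular $e_{sS}=v_sv_s^*$.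 *)

theory Defs
  imports Complex_Main "HOL-Library.Countable"
begin

class cstar_algebra = real_normed_algebra_1 + banach +
  fixes scaleC :: "complex \<Rightarrow> 'a \<Rightarrow> 'a"
    and cstar :: "'a \<Rightarrow> 'a"
  assumes scaleC_add_right: "scaleC a (x + y) = scaleC a x + scaleC a y"
    and scaleC_add_left: "scaleC (a + b) x = scaleC a x + scaleC b x"
    and scaleC_scaleC: "scaleC a (scaleC b x) = scaleC (a * b) x"
    and scaleC_one: "scaleC 1 x = x"
    and scaleR_scaleC: "scaleR r x = scaleC (complex_of_real r) x"
    and norm_scaleC: "norm (scaleC a x) = cmod a * norm x"
    and mult_scaleC_left: "scaleC a x * y = scaleC a (x * y)"
    and mult_scaleC_right: "x * scaleC a y = scaleC a (x * y)"
    and cstar_cstar: "cstar (cstar x) = x"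
    and cstar_add: "cstar (x + y) = cstar x + cstar y"
    and cstar_mult: "cstar (x * y) = cstar y * cstar x"
    and cstar_scaleC: "cstar (scaleC a x) = scaleC (cnj a) (cstar x)"
    and cstar_identity: "norm (cstar x * x) = norm x * norm x"

definition rideal :: "'a::monoid_mult \<Rightarrow> 'a set" where
  "rideal s = range (\<lambda>x. s * x)"

definition left_cancellative :: "'a::monoid_mult itself \<Rightarrow> bool" where
  "left_cancellative _ \<longleftrightarrow> (\<forall>a b c :: 'a. a * b = a * c \<longrightarrow> b = c)"

definition right_LCM :: "'a::monoid_mult itself \<Rightarrow> bool" where
  "right_LCM T \<longleftrightarrow> left_cancellative T \<and>
     (\<forall>s t :: 'a. rideal s \<inter> rideal t = {} \<or> (\<exists>r. rideal s \<inter> rideal t = rideal r))"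

definition foundation_set :: "'a::monoid_mult set \<Rightarrow> bool" where
  "foundation_set F \<longleftrightarrow> finite F \<and> (\<forall>t. \<exists>s\<in>F. rideal s \<inter> rideal t \<noteq> {})"

definition accurate :: "'a::monoid_mult set \<Rightarrow> bool" where
  "accurate F \<longleftrightarrow> (\<forall>f\<in>F. \<forall>f'\<in>F. f \<noteq> f' \<longrightarrow> rideal f \<inter> rideal f' = {})"

definition core :: "'a::monoid_mult set" where
  "core = {s. \<forall>t. rideal s \<inter> rideal t \<noteq> {}}"

definition constructible_ideals :: "'a::monoid_mult set set" where
  "constructible_ideals = insert {} (range rideal)"

text \<open>By the universal property of C*(S), unital *-homomorphisms pi from C*(S)
  into a unital C*-algebra B correspond exactly to families V s = pi(v_s),
  E X = pi(e_X) (X in J(S)) in B satisfying the defining relations below.\<close>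

definition li_rep :: "('a::monoid_mult \<Rightarrow> 'b::cstar_algebra) \<Rightarrow> ('a set \<Rightarrow> 'b) \<Rightarrow> bool" where
  "li_rep V E \<longleftrightarrow>
     (\<forall>s. cstar (V s) * V s = 1) \<and>
     (\<forall>X\<in>constructible_ideals. cstar (E X) = E X \<and> E X * E X = E X) \<and>
     (\<forall>s t. V (s * t) = V s * V t) \<and>
     (\<forall>s. \<forall>X\<in>constructible_ideals. V s * E X * cstar (V s) = E ((\<lambda>x. s * x) ` X)) \<and>
     E UNIV = 1 \<and> E {} = 0 \<and>
     (\<forall>X\<in>constructible_ideals. \<forall>Y\<in>constructible_ideals. E X * E Y = E (X \<inter> Y))"

end

theory Submission
  imports Defs
begin

lemma rideal_mult: "rideal (a * b) = (\<lambda>x. a * x) ` rideal (b::'a::monoid_mult)"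
  unfolding rideal_def by (auto simp: image_image mult.assoc)

lemma rideal_sub: "rideal (a * b) \<subseteq> rideal (a::'a::monoid_mult)"
  unfolding rideal_def by (auto simp: mult.assoc)

lemma rideal_in: "rideal x \<in> constructible_ideals"
  unfolding constructible_ideals_def by auto

lemma univ_in: "(UNIV::'a::monoid_mult set) \<in> constructible_ideals"
proof -
  have "(UNIV::'a set) = rideal 1" unfolding rideal_def by auto
  then show ?thesis using rideal_in by metis
qed

lemma E_rideal:
  assumes "li_rep V E"
  shows "E (rideal f) = V f * cstar (V f)"
proof -
  have "V f * E UNIV * cstar (V f) = E ((\<lambda>x. f * x) ` UNIV)"
    using assms univ_in unfolding li_rep_def by blast
  moreover have "E UNIV = 1" using assms unfolding li_rep_def by blast
  ultimately show ?thesis unfolding rideal_def by simp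
qed

lemma E_mult:
  assumes "li_rep V E"
  shows "E (rideal a) * E (rideal b) = E (rideal a \<inter> rideal b)"
  using assms rideal_in unfolding li_rep_def by blast

lemma E_empty: "li_rep V E \<Longrightarrow> E {} = 0"
  unfolding li_rep_def by blast

lemma E_conj:
  assumes "li_rep V E" "X \<in> constructible_ideals"
  shows "V s * E X * cstar (V s) = E ((\<lambda>x. s * x) ` X)"
  using assms unfolding li_rep_def by blast

lemma iso: "li_rep V E \<Longrightarrow> cstar (V s) * V s = 1"
  unfolding li_rep_def by blast

theorem corollary2p4:
  fixes F :: "'a::{monoid_mult, countable} set" and s :: 'a
  assumes "right_LCM TYPE('a)"
    and "foundation_set F" and "accurate F"
    and "s \<in> core"
  shows "foundation_set ((\<lambda>f. s * f) ` F) \<and> accurate ((\<lambda>f. s * f) ` F) \<and>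
         foundation_set ((\<lambda>f. f * s) ` F) \<and> accurate ((\<lambda>f. f * s) ` F) \<and>
         (\<forall>(V :: 'a \<Rightarrow> 'b::cstar_algebra) E. li_rep V E \<longrightarrow>
            (((\<Sum>f\<in>(\<lambda>f. s * f) ` F. E (rideal f)) = 1 \<longleftrightarrow>
                ((\<Sum>f\<in>F. E (rideal f)) = 1 \<and> V s * cstar (V s) = 1)) \<and>
             ((\<Sum>f\<in>(\<lambda>f. f * s) ` F. E (rideal f)) = 1 \<longleftrightarrow>
                ((\<Sum>f\<in>F. E (rideal f)) = 1 \<and> V s * cstar (V s) = 1))))"
proof -
  have lc: "\<And>a b c::'a. a * b = a * c \<Longrightarrow> b = c"
    using assms(1) unfolding right_LCM_def left_cancellative_def by blast
  have fin: "finite F" and fnd: "\<And>t. \<exists>f\<in>F. rideal f \<inter> rideal t \<noteq> {}"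
    using assms(2) unfolding foundation_set_def by auto
  have acc: "\<And>f f'. f \<in> F \<Longrightarrow> f' \<in> F \<Longrightarrow> f \<noteq> f' \<Longrightarrow> rideal f \<inter> rideal f' = {}"
    using assms(3) unfolding accurate_def by blast
  have cor: "\<And>t. rideal s \<inter> rideal t \<noteq> {}" using assms(4) unfolding core_def by blast
  have Fne: "F \<noteq> {}" using fnd by blast
  have inj1: "inj_on (\<lambda>f. s * f) F" by (rule inj_onI) (use lc in blast)
  have inj2: "inj_on (\<lambda>f. f * s) F"
  proof (rule inj_onI)
    fix f f' assume h: "f \<in> F" "f' \<in> F" "f * s = f' * s"
    show "f = f'"
    proof (rule ccontr)
      assume "f \<noteq> f'"
      then have "rideal f \<inter> rideal f' = {}" using acc h by blast
      moreover have "f * s \<in> rideal f" "f' * s \<in> rideal f'" unfolding rideal_def by auto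
      ultimately show False using h by auto
    qed
  qed
  have f1: "foundation_set ((\<lambda>f. s * f) ` F)"
    unfolding foundation_set_def
  proof (intro conjI allI)
    show "finite ((\<lambda>f. s * f) ` F)" using fin by simp
    fix t
    obtain a b where ab: "s * a = t * b" using cor[of t] unfolding rideal_def by auto
    obtain f where f: "f \<in> F" "rideal f \<inter> rideal a \<noteq> {}" using fnd by blast
    then obtain c d where cd: "f * c = a * d" unfolding rideal_def by auto
    have "s * f * c = t * (b * d)" using cd ab by (metis mult.assoc)
    then have "rideal (s * f) \<inter> rideal t \<noteq> {}" unfolding rideal_def by blast
    then show "\<exists>x\<in>(\<lambda>f. s * f) ` F. rideal x \<inter> rideal t \<noteq> {}" using f by blast
  qed
  have a1: "accurate ((\<lambda>f. s * f) ` F)"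
    unfolding accurate_def
  proof (intro ballI impI)
    fix x y assume h: "x \<in> (\<lambda>f. s * f) ` F" "y \<in> (\<lambda>f. s * f) ` F" "x \<noteq> y"
    then obtain f f' where ff: "f \<in> F" "f' \<in> F" "x = s * f" "y = s * f'" by blast
    then have "f \<noteq> f'" using h by blast
    then have e: "rideal f \<inter> rideal f' = {}" using acc ff by blast
    show "rideal x \<inter> rideal y = {}"
    proof (rule ccontr)
      assume "rideal x \<inter> rideal y \<noteq> {}"
      then obtain c d where "s * f * c = s * f' * d" using ff unfolding rideal_def by auto
      then have "f * c = f' * d" using lc by (metis mult.assoc)
      then show False using e unfolding rideal_def by blast
    qed
  qed
  have f2: "foundation_set ((\<lambda>f. f * s) ` F)"
    unfolding foundation_set_def
  proof (intro conjI allI)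
    show "finite ((\<lambda>f. f * s) ` F)" using fin by simp
    fix t
    obtain f where f: "f \<in> F" "rideal f \<inter> rideal t \<noteq> {}" using fnd by blast
    then obtain a b where ab: "f * a = t * b" unfolding rideal_def by auto
    obtain c d where cd: "s * c = a * d" using cor[of a] unfolding rideal_def by auto
    have "f * s * c = t * (b * d)" using cd ab by (metis mult.assoc)
    then have "rideal (f * s) \<inter> rideal t \<noteq> {}" unfolding rideal_def by blast
    then show "\<exists>x\<in>(\<lambda>f. f * s) ` F. rideal x \<inter> rideal t \<noteq> {}" using f by blast
  qed
  have a2: "accurate ((\<lambda>f. f * s) ` F)"
    unfolding accurate_def
  proof (intro ballI impI)
    fix x y assume h: "x \<in> (\<lambda>f. f * s) ` F" "y \<in> (\<lambda>f. f * s) ` F" "x \<noteq> y"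
    then obtain f f' where ff: "f \<in> F" "f' \<in> F" "x = f * s" "y = f' * s" by blast
    then have "f \<noteq> f'" using h by blast
    then have e: "rideal f \<inter> rideal f' = {}" using acc ff by blast
    show "rideal x \<inter> rideal y = {}" using e ff rideal_sub by blast
  qed
  have C: "((\<Sum>f\<in>(\<lambda>f. s * f) ` F. E (rideal f)) = 1 \<longleftrightarrow>
                ((\<Sum>f\<in>F. E (rideal f)) = 1 \<and> V s * cstar (V s) = 1)) \<and>
             ((\<Sum>f\<in>(\<lambda>f. f * s) ` F. E (rideal f)) = 1 \<longleftrightarrow>
                ((\<Sum>f\<in>F. E (rideal f)) = 1 \<and> V s * cstar (V s) = 1))"
    if L: "li_rep V E" for V :: "'a \<Rightarrow> 'b::cstar_algebra" and E
  proof -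
    define Q where "Q = (\<Sum>f\<in>F. E (rideal f))"
    define p where "p = V s * cstar (V s)"
    have is1: "cstar (V x) * V x = 1" for x using iso[OF L] .
    have S1: "(\<Sum>f\<in>(\<lambda>f. s * f) ` F. E (rideal f)) = V s * Q * cstar (V s)"
    proof -
      have "(\<Sum>f\<in>(\<lambda>f. s * f) ` F. E (rideal f)) = (\<Sum>f\<in>F. E (rideal (s * f)))"
        using sum.reindex[OF inj1] by simp
      also have "\<dots> = (\<Sum>f\<in>F. V s * E (rideal f) * cstar (V s))"
        using E_conj[OF L rideal_in] by (simp add: rideal_mult)
      also have "\<dots> = V s * Q * cstar (V s)"
        unfolding Q_def by (simp add: sum_distrib_left sum_distrib_right)
      finally show ?thesis .
    qed
    have P1: "V s * Q * cstar (V s) = 1 \<longleftrightarrow> Q = 1 \<and> p = 1"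
    proof
      assume h: "V s * Q * cstar (V s) = 1"
      have "cstar (V s) * (V s * Q * cstar (V s)) * V s = Q"
        by (simp add: mult.assoc is1) (simp add: mult.assoc[symmetric] is1)
      then have "Q = 1" using h by (simp add: is1)
      then show "Q = 1 \<and> p = 1" using h p_def by simp
    next
      assume "Q = 1 \<and> p = 1" then show "V s * Q * cstar (V s) = 1" using p_def by simp
    qed
    have S2: "(\<Sum>f\<in>(\<lambda>f. f * s) ` F. E (rideal f)) = (\<Sum>f\<in>F. E (rideal (f * s)))"
      using sum.reindex[OF inj2] by simp
    have R: "E (rideal (f * s)) = V f * p * cstar (V f)" for f
    proof -
      have "E (rideal (f * s)) = V (f * s) * cstar (V (f * s))" by (rule E_rideal[OF L])
      also have "\<dots> = V f * V s * cstar (V f * V s)"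
        using L unfolding li_rep_def by simp
      also have "\<dots> = V f * p * cstar (V f)"
        unfolding p_def by (simp add: cstar_mult mult.assoc)
      finally show ?thesis .
    qed
    have P2: "(\<Sum>f\<in>F. E (rideal (f * s))) = 1 \<longleftrightarrow> Q = 1 \<and> p = 1"
    proof
      assume h: "(\<Sum>f\<in>F. E (rideal (f * s))) = 1"
      have eq: "E (rideal g) = E (rideal (g * s))" if g: "g \<in> F" for g
      proof -
        have "E (rideal g) = (\<Sum>f\<in>F. E (rideal (f * s))) * E (rideal g)" using h by simp
        also have "\<dots> = (\<Sum>f\<in>F. E (rideal (f * s)) * E (rideal g))"
          by (simp add: sum_distrib_right)
        also have "\<dots> = (\<Sum>f\<in>F. if f = g then E (rideal (g * s)) else 0)"
        proof (rule sum.cong[OF refl])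
          fix f assume f: "f \<in> F"
          have m: "E (rideal (f * s)) * E (rideal g) = E (rideal (f * s) \<inter> rideal g)"
            by (rule E_mult[OF L])
          show "E (rideal (f * s)) * E (rideal g) = (if f = g then E (rideal (g * s)) else 0)"
          proof (cases "f = g")
            case True
            then have "rideal (f * s) \<inter> rideal g = rideal (g * s)" using rideal_sub by blast
            then show ?thesis using m True by simp
          next
            case False
            then have "rideal (f * s) \<inter> rideal g = {}" using acc[OF f g] rideal_sub by blast
            then show ?thesis using m False E_empty[OF L] by simp
          qed
        qed
        also have "\<dots> = E (rideal (g * s))" using fin g by (simp add: sum.delta)
        finally show ?thesis .
      qed
      have "Q = 1" unfolding Q_def using h eq by (metis (no_types, lifting) sum.cong)
      moreover obtain g where g: "g \<in> F" using Fne by blast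
      have "p = 1"
      proof -
        have "V g * cstar (V g) = V g * p * cstar (V g)"
          using eq[OF g] E_rideal[OF L] R by metis
        then have "cstar (V g) * (V g * cstar (V g)) * V g = cstar (V g) * (V g * p * cstar (V g)) * V g"
          by simp
        then show ?thesis by (simp add: mult.assoc is1) (simp add: mult.assoc[symmetric] is1)
      qed
      ultimately show "Q = 1 \<and> p = 1" by simp
    next
      assume h: "Q = 1 \<and> p = 1"
      have "(\<Sum>f\<in>F. E (rideal (f * s))) = (\<Sum>f\<in>F. E (rideal f))"
        using h R E_rideal[OF L] by simp
      then show "(\<Sum>f\<in>F. E (rideal (f * s))) = 1" using h Q_def by simp
    qed
    show ?thesis using S1 P1 S2 P2 unfolding Q_def p_def by simp
  qed
  show ?thesis using f1 a1 f2 a2 C by blast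
qed

end
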